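(* Let $M$ be a universal semi-POVM. Then $M$ is not computable, and $M$ is not a POVM on $\Sigma^*$, i.e. $\sum_{s\in\Sigma^*}M(s)\neq I$.
   Context: $N$ is a fixed positive integer; $\Sigma^*$ is the set of finite binary strings. $\mathrm{Her}(N)$ is the set of $N\times N$ Hermitian matrices and $\mathrm{Her}_Q(N)$ those with entries in $\mathbb{C}_Q=\{a+ib:a,b\in\mathbb{Q}\}$; $A\leqslant B$ means $B-A$ is positive semi-definite. A semi-POVM on $\Sigma^*$ is a map $R:\Sigma^*\to\mathrm{Her}(N)$ with $0\leqslant R(s)$ for all $s$ and $\sum_s R(s)\leqslant I$; it is a POVM on $\Sigma^*$ if $\sum_s R(s)=I$. A map $F:\Sigma^*\to M_N(\mathbb{C})$ is computable if there is a total recursive $G:\Sigma^*\times\mathbb{N}\to M_N(\mathbb{C}_Q)$ with $\|F(s)-G(s,k)\|<2^{-k}$ for all $s,k$. A lower-computable semi-POVM is a semi-POVM $R$ for which there is a total recursive $f:\mathbb{N}\times\Sigma^*\to\mathrm{Her}_Q(N)$ with $\lim_{n}f(n,s)=R(s)$ and $f(n,s)\leqslant R(s)$ for all $n,s$. A universal semi-POVM is a lower-computable semi-POVM $M$ such that for every lower-computable semi-POVM $R$ there is $c>0$ with $c\,R(s)\leqslant M(s)$ for all $s\in\Sigma^*$. *)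

theory Defs
  imports "HOL-Analysis.Analysis"
begin

text \<open>total_rec n f: f is a total recursive function of n natural-number arguments,
  given as a function on argument lists (only lists of length n matter).\<close>

inductive total_rec :: "nat \<Rightarrow> (nat list \<Rightarrow> nat) \<Rightarrow> bool" where
  zero: "total_rec n (\<lambda>_. 0)"
| succ: "total_rec 1 (\<lambda>xs. Suc (hd xs))"
| proj: "i < n \<Longrightarrow> total_rec n (\<lambda>xs. xs ! i)"
| compose: "total_rec m f \<Longrightarrow> length gs = m \<Longrightarrow> (\<forall>g\<in>set gs. total_rec n g)
          \<Longrightarrow> total_rec n (\<lambda>xs. f (map (\<lambda>g. g xs) gs))"
| prim_rec: "total_rec n g \<Longrightarrow> total_rec (Suc (Suc n)) h
          \<Longrightarrow> total_rec (Suc n) (\<lambda>xs. rec_nat (g (tl xs)) (\<lambda>k r. h (k # r # tl xs)) (hd xs))"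
| minimise: "total_rec (Suc n) g \<Longrightarrow> (\<forall>ys. length ys = n \<longrightarrow> (\<exists>y. g (y # ys) = 0))
          \<Longrightarrow> total_rec n (\<lambda>ys. LEAST y. g (y # ys) = 0)"

text \<open>Standard bijective coding of binary strings as naturals: s \<mapsto> (value of binary word 1s) - 1.\<close>
definition str_code :: "bool list \<Rightarrow> nat" where
  "str_code s = foldl (\<lambda>a b. 2 * a + (if b then 1 else 0)) 1 s - 1"

definition rec_rat_fn :: "(nat \<Rightarrow> nat \<Rightarrow> rat) \<Rightarrow> bool" where
  "rec_rat_fn q \<longleftrightarrow> (\<exists>a b c. total_rec 2 a \<and> total_rec 2 b \<and> total_rec 2 c \<and>
     (\<forall>x y. q x y = (of_nat (a [x, y]) - of_nat (b [x, y])) / of_nat (c [x, y] + 1)))"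

definition total_rec_QC_mat :: "(bool list \<Rightarrow> nat \<Rightarrow> complex^'n^'n) \<Rightarrow> bool" where
  "total_rec_QC_mat G \<longleftrightarrow> (\<forall>i j. \<exists>re im.
     rec_rat_fn re \<and> rec_rat_fn im \<and>
     (\<forall>s k. G s k $ i $ j = Complex (of_rat (re (str_code s) k)) (of_rat (im (str_code s) k))))"

definition total_rec_QC_mat' :: "(nat \<Rightarrow> bool list \<Rightarrow> complex^'n^'n) \<Rightarrow> bool" where
  "total_rec_QC_mat' f \<longleftrightarrow> (\<forall>i j. \<exists>re im.
     rec_rat_fn re \<and> rec_rat_fn im \<and>
     (\<forall>n s. f n s $ i $ j = Complex (of_rat (re n (str_code s))) (of_rat (im n (str_code s)))))"

definition hermitian :: "complex^'n^'n \<Rightarrow> bool" where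
  "hermitian A \<longleftrightarrow> (\<forall>i j. A $ i $ j = cnj (A $ j $ i))"

definition psd :: "complex^'n^'n \<Rightarrow> bool" where
  "psd A \<longleftrightarrow> hermitian A \<and>
     (\<forall>x::complex^'n. 0 \<le> Re (\<Sum>i\<in>UNIV. cnj (x $ i) * (A *v x) $ i))"

definition loewner_le :: "complex^'n^'n \<Rightarrow> complex^'n^'n \<Rightarrow> bool" (infix "\<preceq>\<^sub>L" 50) where
  "A \<preceq>\<^sub>L B \<longleftrightarrow> psd (B - A)"

definition her_Q :: "complex^'n^'n \<Rightarrow> bool" where
  "her_Q A \<longleftrightarrow> hermitian A \<and> (\<forall>i j. Re (A $ i $ j) \<in> \<rat> \<and> Im (A $ i $ j) \<in> \<rat>)"

definition semi_povm :: "(bool list \<Rightarrow> complex^'n^'n) \<Rightarrow> bool" where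
  "semi_povm R \<longleftrightarrow> (\<forall>s. hermitian (R s) \<and> 0 \<preceq>\<^sub>L R s) \<and>
     (\<exists>S. (R has_sum S) UNIV \<and> S \<preceq>\<^sub>L mat 1)"

definition povm :: "(bool list \<Rightarrow> complex^'n^'n) \<Rightarrow> bool" where
  "povm R \<longleftrightarrow> (\<forall>s. hermitian (R s) \<and> 0 \<preceq>\<^sub>L R s) \<and> (R has_sum mat 1) UNIV"

definition computable_mat_fn :: "(bool list \<Rightarrow> complex^'n^'n) \<Rightarrow> bool" where
  "computable_mat_fn F \<longleftrightarrow> (\<exists>G. total_rec_QC_mat G \<and>
     (\<forall>s k. norm (F s - G s k) < (1/2) ^ k))"

definition lower_computable_semi_povm :: "(bool list \<Rightarrow> complex^'n^'n) \<Rightarrow> bool" where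
  "lower_computable_semi_povm R \<longleftrightarrow> semi_povm R \<and>
     (\<exists>f. total_rec_QC_mat' f \<and> (\<forall>n s. her_Q (f n s)) \<and>
        (\<forall>s. (\<lambda>n. f n s) \<longlonglongrightarrow> R s) \<and> (\<forall>n s. f n s \<preceq>\<^sub>L R s))"

definition universal_semi_povm :: "(bool list \<Rightarrow> complex^'n^'n) \<Rightarrow> bool" where
  "universal_semi_povm M \<longleftrightarrow> lower_computable_semi_povm M \<and>
     (\<forall>R. lower_computable_semi_povm R \<longrightarrow> (\<exists>c::real. c > 0 \<and> (\<forall>s. c *\<^sub>R R s \<preceq>\<^sub>L M s)))"

end

theory Submission
  imports Defs
begin


definition rf :: "nat \<Rightarrow> (nat list \<Rightarrow> nat) \<Rightarrow> bool" where
  "rf n f \<longleftrightarrow> (\<exists>g. total_rec n g \<and> (\<forall>xs. length xs = n \<longrightarrow> g xs = f xs))"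

lemma rf_cong: "rf n f \<Longrightarrow> (\<And>xs. length xs = n \<Longrightarrow> f xs = f' xs) \<Longrightarrow> rf n f'"
  unfolding rf_def by metis

lemma rf_total: "total_rec n f \<Longrightarrow> rf n f"
  unfolding rf_def by blast

lemma rf_const0: "rf n (\<lambda>_. 0)"
  by (rule rf_total) (rule total_rec.zero)

lemma rf_proj: "i < n \<Longrightarrow> rf n (\<lambda>xs. xs ! i)"
  by (rule rf_total) (rule total_rec.proj)

lemma rf_succ1: "rf 1 (\<lambda>xs. Suc (xs ! 0))"
  using rf_total[OF total_rec.succ] by (rule rf_cong) (case_tac xs; simp)

lemma rf_compose:
  assumes "rf m f" "length gs = m" "\<forall>g\<in>set gs. rf n g"
  shows "rf n (\<lambda>xs. f (map (\<lambda>g. g xs) gs))"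
proof -
  obtain f' where f': "total_rec m f'" "\<And>xs. length xs = m \<Longrightarrow> f' xs = f xs"
    using assms(1) unfolding rf_def by blast
  have "\<forall>g\<in>set gs. \<exists>g'. total_rec n g' \<and> (\<forall>xs. length xs = n \<longrightarrow> g' xs = g xs)"
    using assms(3) unfolding rf_def by blast
  then obtain W where W: "\<And>g. g \<in> set gs \<Longrightarrow> total_rec n (W g) \<and> (\<forall>xs. length xs = n \<longrightarrow> W g xs = g xs)"
    by metis
  have tr: "total_rec n (\<lambda>xs. f' (map (\<lambda>g. g xs) (map W gs)))"
    by (rule total_rec.compose[OF f'(1)]) (use assms(2) W in auto)
  show ?thesis unfolding rf_def
  proof (intro exI conjI allI impI, rule tr)
    fix xs :: "nat list" assume "length xs = n"
    then have eq: "map (\<lambda>g. g xs) (map W gs) = map (\<lambda>g. g xs) gs"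
      unfolding map_map o_def using W by (intro map_cong) auto
    then show "f' (map (\<lambda>g. g xs) (map W gs)) = f (map (\<lambda>g. g xs) gs)"
      using f'(2)[of "map (\<lambda>g. g xs) gs"] assms(2) unfolding eq by simp
  qed
qed

lemma rf_comp1: "rf 1 f \<Longrightarrow> rf n a \<Longrightarrow> rf n (\<lambda>xs. f [a xs])"
  using rf_compose[of 1 f "[a]" n] by simp

lemma rf_comp2: "rf 2 f \<Longrightarrow> rf n a \<Longrightarrow> rf n b \<Longrightarrow> rf n (\<lambda>xs. f [a xs, b xs])"
  using rf_compose[of 2 f "[a,b]" n] by simp

lemma rf_comp3: "rf 3 f \<Longrightarrow> rf n a \<Longrightarrow> rf n b \<Longrightarrow> rf n c \<Longrightarrow> rf n (\<lambda>xs. f [a xs, b xs, c xs])"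
  using rf_compose[of 3 f "[a,b,c]" n] by (simp add: numeral_3_eq_3)

lemma rf_prim_rec:
  assumes "rf n g" "rf (Suc (Suc n)) h"
  shows "rf (Suc n) (\<lambda>xs. rec_nat (g (tl xs)) (\<lambda>k r. h (k # r # tl xs)) (hd xs))"
proof -
  obtain g' where g': "total_rec n g'" "\<And>xs. length xs = n \<Longrightarrow> g' xs = g xs"
    using assms(1) unfolding rf_def by blast
  obtain h' where h': "total_rec (Suc (Suc n)) h'" "\<And>xs. length xs = Suc (Suc n) \<Longrightarrow> h' xs = h xs"
    using assms(2) unfolding rf_def by blast
  show ?thesis unfolding rf_def
  proof (intro exI conjI allI impI, rule total_rec.prim_rec[OF g'(1) h'(1)])
    fix xs :: "nat list" assume l: "length xs = Suc n"
    show "rec_nat (g' (tl xs)) (\<lambda>k r. h' (k # r # tl xs)) (hd xs) =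
          rec_nat (g (tl xs)) (\<lambda>k r. h (k # r # tl xs)) (hd xs)"
      by (induction "hd xs") (use l g' h' in auto)
  qed
qed

lemma rf_minimise:
  assumes "rf (Suc n) g" "\<And>ys. length ys = n \<Longrightarrow> \<exists>y. g (y # ys) = 0"
  shows "rf n (\<lambda>ys. LEAST y. g (y # ys) = 0)"
proof -
  obtain g' where g': "total_rec (Suc n) g'" "\<And>xs. length xs = Suc n \<Longrightarrow> g' xs = g xs"
    using assms(1) unfolding rf_def by blast
  have ex: "\<forall>ys. length ys = n \<longrightarrow> (\<exists>y. g' (y # ys) = 0)" using assms(2) g'(2) by simp
  show ?thesis unfolding rf_def
    by (intro exI conjI allI impI, rule total_rec.minimise[OF g'(1) ex]) (use g'(2) in simp)
qed

lemma len2: "length xs = 2 \<Longrightarrow> xs = [xs!0, xs!1]"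
  by (cases xs; cases "tl xs") auto

lemma len1: "length xs = 1 \<Longrightarrow> xs = [xs!0]"
  by (cases xs) auto

lemma len3: "length xs = 3 \<Longrightarrow> xs = [xs!0, xs!1, xs!2]"
  by (cases xs; cases "tl xs"; cases "tl (tl xs)") auto

lemma rf_cong2: "rf (Suc (Suc 0)) f \<Longrightarrow> (\<And>x y. f [x,y] = f' [x,y]) \<Longrightarrow> rf 2 f'"
  unfolding numeral_2_eq_2 by (erule rf_cong) (metis len2 numeral_2_eq_2)

lemma rf_add2: "rf 2 (\<lambda>xs. xs!0 + xs!1)"
proof -
  have "rf (Suc (Suc 0)) (\<lambda>xs. rec_nat ((\<lambda>ys. ys!0) (tl xs)) (\<lambda>k r. (\<lambda>zs. Suc (zs!1)) (k # r # tl xs)) (hd xs))"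
  proof (rule rf_prim_rec)
    show "rf (Suc 0) (\<lambda>ys. ys!0)" by (rule rf_proj) simp
    show "rf (Suc (Suc (Suc 0))) (\<lambda>zs. Suc (zs ! 1))"
      using rf_comp1[OF rf_succ1 rf_proj[of 1 "Suc (Suc (Suc 0))"]] by simp
  qed
  then show ?thesis
    by (rule rf_cong2) (simp, induct_tac x, auto)
qed

lemma rf_add: "rf n a \<Longrightarrow> rf n b \<Longrightarrow> rf n (\<lambda>xs. a xs + b xs)"
  using rf_comp2[OF rf_add2] by simp

lemma rf_Suc: "rf n a \<Longrightarrow> rf n (\<lambda>xs. Suc (a xs))"
  using rf_comp1[OF rf_succ1] by simp

lemma rf_const: "rf n (\<lambda>_. k)"
proof (induction k)
  case 0 show ?case by (rule rf_const0)
next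
  case (Suc k) show ?case using rf_Suc[OF Suc] by simp
qed

lemma rf_mult2: "rf 2 (\<lambda>xs. xs!0 * xs!1)"
proof -
  have "rf (Suc (Suc 0)) (\<lambda>xs. rec_nat ((\<lambda>ys. 0) (tl xs)) (\<lambda>k r. (\<lambda>zs. zs!1 + zs!2) (k # r # tl xs)) (hd xs))"
  proof (rule rf_prim_rec)
    show "rf (Suc 0) (\<lambda>ys. 0)" by (rule rf_const0)
    show "rf (Suc (Suc (Suc 0))) (\<lambda>zs. zs ! 1 + zs!2)"
      by (intro rf_add rf_proj) auto
  qed
  then show ?thesis
    by (rule rf_cong2) (simp, induct_tac x, auto)
qed

lemma rf_mult: "rf n a \<Longrightarrow> rf n b \<Longrightarrow> rf n (\<lambda>xs. a xs * b xs)"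
  using rf_comp2[OF rf_mult2] by simp

lemma rf_pred1: "rf 1 (\<lambda>xs. xs!0 - 1)"
proof -
  have "rf (Suc 0) (\<lambda>xs. rec_nat ((\<lambda>ys. 0) (tl xs)) (\<lambda>k r. (\<lambda>zs. zs!0) (k # r # tl xs)) (hd xs))"
    by (rule rf_prim_rec) (auto intro: rf_const0 rf_proj)
  then show ?thesis unfolding One_nat_def
  proof (rule rf_cong)
    fix xs :: "nat list" assume "length xs = Suc 0"
    then obtain x where xs: "xs = [x]" by (cases xs) auto
    show "rec_nat ((\<lambda>ys. 0) (tl xs)) (\<lambda>k r. (\<lambda>zs. zs!0) (k # r # tl xs)) (hd xs) = xs!0 - Suc 0"
      unfolding xs by (cases x) auto
  qed
qed

lemma rf_pred: "rf n a \<Longrightarrow> rf n (\<lambda>xs. a xs - 1)"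
  using rf_comp1[OF rf_pred1] by simp

lemma rf_sub2: "rf 2 (\<lambda>xs. xs!1 - xs!0)"
proof -
  have "rf (Suc (Suc 0)) (\<lambda>xs. rec_nat ((\<lambda>ys. ys!0) (tl xs)) (\<lambda>k r. (\<lambda>zs. zs!1 - 1) (k # r # tl xs)) (hd xs))"
    by (rule rf_prim_rec) (use rf_pred[OF rf_proj[of 1 "Suc (Suc (Suc 0))"]] rf_proj[of 0 "Suc 0"] in auto)
  then show ?thesis
    by (rule rf_cong2) (simp, induct_tac x, auto)
qed

lemma rf_sub: "rf n a \<Longrightarrow> rf n b \<Longrightarrow> rf n (\<lambda>xs. a xs - b xs)"
  using rf_comp2[OF rf_sub2, of n b a] by simp

lemma rf_pow2: "rf 2 (\<lambda>xs. xs!1 ^ xs!0)"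
proof -
  have "rf (Suc (Suc 0)) (\<lambda>xs. rec_nat ((\<lambda>ys. 1) (tl xs)) (\<lambda>k r. (\<lambda>zs. zs!1 * zs!2) (k # r # tl xs)) (hd xs))"
    by (rule rf_prim_rec) (auto intro!: rf_mult rf_proj rf_const)
  then show ?thesis
    by (rule rf_cong2) (simp, induct_tac x, auto)
qed

lemma rf_pow: "rf n a \<Longrightarrow> rf n b \<Longrightarrow> rf n (\<lambda>xs. a xs ^ b xs)"
  using rf_comp2[OF rf_pow2, of n b a] by simp

lemma rf_if_less: assumes h: "rf n a" "rf n b" "rf n c" "rf n d" shows "
   rf n (\<lambda>xs. if a xs < b xs then c xs else d xs)"
proof -
  have "rf n (\<lambda>xs. c xs * (1 - (1 - (b xs - a xs))) + d xs * (1 - (b xs - a xs)))"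
    by (intro rf_add rf_mult rf_sub rf_const h)
  then show ?thesis by (rule rf_cong) auto
qed

lemma rf_if_le: assumes h: "rf n a" "rf n b" "rf n c" "rf n d" shows "
   rf n (\<lambda>xs. if a xs \<le> b xs then c xs else d xs)"
proof -
  have "rf n (\<lambda>xs. if b xs < a xs then d xs else c xs)"
    by (intro rf_if_less h)
  then show ?thesis by (rule rf_cong) auto
qed

lemma rf_if_eq: assumes h: "rf n a" "rf n b" "rf n c" "rf n d" shows "
   rf n (\<lambda>xs. if a xs = b xs then c xs else d xs)"
proof -
  have "rf n (\<lambda>xs. if a xs < b xs then d xs else if b xs < a xs then d xs else c xs)"
    by (intro rf_if_less h)
  then show ?thesis by (rule rf_cong) auto
qed

lemma rf_max: assumes h: "rf n a" "rf n b" shows "rf n (\<lambda>xs. max (a xs) (b xs))"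
proof -
  have "rf n (\<lambda>xs. if a xs \<le> b xs then b xs else a xs)"
    by (intro rf_if_le h)
  then show ?thesis by (rule rf_cong) (auto simp: max_def)
qed

lemma rf_div2: "rf 2 (\<lambda>xs. xs!0 div Suc (xs!1))"
proof -
  have "rf 2 (\<lambda>ys. LEAST q. (\<lambda>zs. if zs!1 < Suc (zs!0) * Suc (zs!2) then 0 else (1::nat)) (q # ys) = 0)"
  proof (rule rf_minimise[where g = "\<lambda>zs. if zs!1 < Suc (zs!0) * Suc (zs!2) then 0 else 1"])
    have "rf 3 (\<lambda>zs. if zs!1 < Suc (zs!0) * Suc (zs!2) then 0 else 1)"
      by (intro rf_if_less rf_mult rf_Suc rf_proj rf_const) auto
    then show "rf (Suc 2) (\<lambda>zs. if zs!1 < Suc (zs!0) * Suc (zs!2) then 0 else 1)" by simp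
  qed (rename_tac ys, rule_tac x="ys!0" in exI, simp)
  then show ?thesis
  proof (rule rf_cong)
    fix xs :: "nat list"
    have "(LEAST q. (if xs!0 < Suc q * Suc (xs!1) then 0 else 1::nat) = 0) = xs!0 div Suc (xs!1)"
    proof (rule Least_equality)
      show "(if xs!0 < Suc (xs!0 div Suc (xs!1)) * Suc (xs!1) then 0 else 1::nat) = 0"
        using dividend_less_div_times[of "Suc (xs!1)" "xs!0"] by (simp add: algebra_simps)
      fix y assume "(if xs!0 < Suc y * Suc (xs!1) then 0 else 1::nat) = 0"
      then have "xs!0 < Suc y * Suc (xs!1)" by (auto split: if_splits)
      then show "xs!0 div Suc (xs!1) \<le> y"
        by (metis less_Suc_eq_le less_mult_imp_div_less)
    qed
    then show "(LEAST q. (\<lambda>zs. if zs!1 < Suc (zs!0) * Suc (zs!2) then 0 else 1::nat) (q # xs) = 0) = xs!0 div Suc (xs!1)"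
      by simp
  qed
qed

lemma rf_div: "rf n a \<Longrightarrow> rf n b \<Longrightarrow> rf n (\<lambda>xs. a xs div Suc (b xs))"
  using rf_comp2[OF rf_div2] by simp



definition bval :: "bool list \<Rightarrow> nat" where
  "bval s = foldl (\<lambda>a b. 2 * a + (if b then 1 else 0)) 1 s"

lemma bval_snoc: "bval (s @ [b]) = 2 * bval s + (if b then 1 else 0)"
  by (simp add: bval_def)

lemma bval_pos: "bval s \<ge> 1"
  by (induction s rule: rev_induct) (auto simp: bval_snoc bval_def[of "[]"])

function bdec :: "nat \<Rightarrow> bool list" where
  "bdec n = (if n \<le> 1 then [] else bdec (n div 2) @ [odd n])"
  by auto
termination by (relation "Wellfounded.measure id") auto

declare bdec.simps[simp del]

lemma bdec_bval: "bdec (bval s) = s"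
proof (induction s rule: rev_induct)
  case Nil then show ?case by (simp add: bval_def bdec.simps)
next
  case (snoc b s)
  have "bval s \<ge> 1" by (rule bval_pos)
  then show ?case using snoc
    by (subst bdec.simps) (auto simp: bval_snoc)
qed

lemma bval_bdec: "n \<ge> 1 \<Longrightarrow> bval (bdec n) = n"
proof (induction n rule: bdec.induct)
  case (1 n)
  show ?case
  proof (cases "n \<le> 1")
    case True then show ?thesis using 1(2) by (simp add: bdec.simps bval_def)
  next
    case False
    then have "bval (bdec (n div 2)) = n div 2" using 1 by auto
    then show ?thesis using False by (subst bdec.simps) (simp add: bval_snoc)
  qed
qed

definition dec :: "nat \<Rightarrow> bool list" where "dec y = bdec (Suc y)"

lemma str_code_bval: "str_code s = bval s - 1"
  by (simp add: str_code_def bval_def)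

lemma code_dec[simp]: "str_code (dec y) = y"
  by (simp add: str_code_bval dec_def bval_bdec)

lemma dec_code[simp]: "dec (str_code s) = s"
  using bval_pos[of s] by (simp add: str_code_bval dec_def bdec_bval)

lemma bij_dec: "bij dec"
  by (metis bij_betw_byWitness code_dec dec_code top_greatest)



definition diagm :: "('n::finite \<Rightarrow> real) \<Rightarrow> complex^'n^'n" where
  "diagm d = (\<chi> i j. if i = j then complex_of_real (d i) else 0)"

lemma diagm_mult_vec: "(diagm d *v x) $ i = complex_of_real (d i) * x $ i"
  unfolding diagm_def matrix_vector_mult_def by (simp add: if_distrib[where f="\<lambda>a. a * _"] cong: if_cong)

lemma hermitian_diagm: "hermitian (diagm d)"
  by (simp add: hermitian_def diagm_def)

lemma psd_diagm:
  fixes d :: "'n::finite \<Rightarrow> real"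
  assumes "\<And>i. d i \<ge> 0"
  shows "psd (diagm d)"
  unfolding psd_def
proof (intro conjI allI hermitian_diagm)
  fix x :: "complex^'n"
  have "Re (\<Sum>i\<in>UNIV. cnj (x $ i) * (diagm d *v x) $ i) = (\<Sum>i\<in>UNIV. d i * (cmod (x $ i))^2)"
  proof -
    have "\<And>i. Re (cnj (x $ i) * (diagm d *v x) $ i) = d i * (cmod (x $ i))^2"
    proof -
      fix i
      have "(cmod (x $ i))^2 = (Re (x $ i))^2 + (Im (x $ i))^2" by (rule cmod_power2)
      then show "Re (cnj (x $ i) * (diagm d *v x) $ i) = d i * (cmod (x $ i))^2"
        by (simp add: diagm_mult_vec power2_eq_square algebra_simps)
    qed
    then show ?thesis by (simp add: Re_sum)
  qed
  also have "\<dots> \<ge> 0" using assms by (intro sum_nonneg) auto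
  finally show "0 \<le> Re (\<Sum>i\<in>UNIV. cnj (x $ i) * (diagm d *v x) $ i)" .
qed

lemma qf_axis: "(\<Sum>i\<in>UNIV. cnj (axis i0 1 $ i) * ((A::complex^'n^'n) *v axis i0 1) $ i) = A $ i0 $ i0"
  by (simp add: axis_def matrix_vector_mult_def if_distrib[where f="\<lambda>a. _ * a"] if_distrib[where f="\<lambda>a. a * _"] if_distrib[where f=cnj] cong: if_cong)

lemma loewner_diag: "A \<preceq>\<^sub>L B \<Longrightarrow> Re (A $ i $ i) \<le> Re (B $ i $ i)"
  unfolding loewner_le_def psd_def
  by (drule conjunct2, drule spec[of _ "axis i 1"]) (simp add: qf_axis)

lemma diag_nonneg: "0 \<preceq>\<^sub>L A \<Longrightarrow> 0 \<le> Re (A $ i $ i)"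
  using loewner_diag[of 0 A i] by simp

lemma rf2_total: "rf 2 a \<Longrightarrow> \<exists>a'. total_rec 2 a' \<and> (\<forall>x y. a' [x,y] = a [x,y])"
  unfolding rf_def by auto

lemma rec_rat_fnI:
  assumes "rf 2 a" "rf 2 b" "rf 2 c"
    "\<And>x y. q x y = (of_nat (a [x, y]) - of_nat (b [x, y])) / of_nat (c [x, y] + 1)"
  shows "rec_rat_fn q"
proof -
  obtain a' b' c' where "total_rec 2 a'" "\<forall>x y. a' [x,y] = a [x,y]"
    "total_rec 2 b'" "\<forall>x y. b' [x,y] = b [x,y]" "total_rec 2 c'" "\<forall>x y. c' [x,y] = c [x,y]"
    using rf2_total[OF assms(1)] rf2_total[OF assms(2)] rf2_total[OF assms(3)] by metis
  then show ?thesis unfolding rec_rat_fn_def using assms(4) by (intro exI[of _ a'] exI[of _ b'] exI[of _ c']) simp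
qed

lemma rec_rat_fn_0: "rec_rat_fn (\<lambda>_ _. 0)"
  by (rule rec_rat_fnI[OF rf_const0 rf_const0 rf_const0]) simp



lemma rf_app1: "rf 1 (\<lambda>xs. F (xs!0)) \<Longrightarrow> rf n a \<Longrightarrow> rf n (\<lambda>xs. F (a xs))"
  using rf_comp1[of "\<lambda>xs. F (xs!0)" n a] by simp

lemma scaleR_diagm: "c *\<^sub>R diagm d = diagm (\<lambda>i. c * d i)"
  by (auto simp: diagm_def vec_eq_iff complex_eq_iff)

lemma key:
  fixes M :: "bool list \<Rightarrow> complex^'n^'n" and \<sigma> :: "nat \<Rightarrow> nat"
  assumes U: "universal_semi_povm M" and sm: "strict_mono \<sigma>"
    and rs: "rf 1 (\<lambda>xs. \<sigma> (xs!0))"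
    and small: "\<And>k. Re (M (dec (\<sigma> k)) $ i0 $ i0) \<le> 3 * (1/4)^k"
  shows False
proof -
  define K where "K y = (LEAST k. y \<le> \<sigma> k)" for y
  have K\<sigma>: "K (\<sigma> k) = k" for k
    unfolding K_def by (rule Least_equality) (auto simp: strict_mono_less_eq[OF sm])
  define w where "w y = (if \<sigma> (K y) = y then (1/2::real)^(Suc (K y)) else 0)" for y
  have w\<sigma>: "w (\<sigma> k) = (1/2)^Suc k" for k by (simp add: w_def K\<sigma>)
  have w0: "y \<notin> range \<sigma> \<Longrightarrow> w y = 0" for y unfolding w_def by (metis rangeI)
  have wnn: "w y \<ge> 0" for y by (simp add: w_def)
  have wQ: "w y \<in> \<rat>" for y by (simp add: w_def)
  define E :: "complex^'n^'n" where "E = diagm (\<lambda>i. if i = i0 then 1 else 0)"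
  define R where "R s = w (str_code s) *\<^sub>R E" for s
  have Rd: "R s = diagm (\<lambda>i. if i = i0 then w (str_code s) else 0)" for s
    unfolding R_def E_def scaleR_diagm by (rule arg_cong[where f=diagm]) auto
  have Rij: "R s $ i $ j = (if i = i0 \<and> j = i0 then complex_of_real (w (str_code s)) else 0)" for s i j
    unfolding Rd diagm_def by auto
  have "(\<lambda>k. (1/2::real) * (1/2)^k) sums (1/2 * (1 / (1 - 1/2)))"
    by (rule sums_mult, rule geometric_sums) simp
  then have "(\<lambda>k. (1/2::real)^Suc k) sums 1" by simp
  then have "((\<lambda>k. (1/2::real)^Suc k) has_sum 1) UNIV"
    by (rule sums_nonneg_imp_has_sum) simp
  then have "((w \<circ> \<sigma>) has_sum 1) UNIV" by (simp add: o_def w\<sigma>)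
  then have "(w has_sum 1) (range \<sigma>)"
    using has_sum_reindex[OF strict_mono_imp_inj_on[OF sm]] by blast
  then have "(w has_sum 1) UNIV"
    by (subst (asm) has_sum_cong_neutral[where T=UNIV and g=w]) (auto intro: w0)
  from has_sum_bounded_linear[OF bounded_linear_scaleR_left[of E] this]
  have "((\<lambda>y. w y *\<^sub>R E) has_sum E) UNIV" by simp
  then have "((\<lambda>y. R (dec y)) has_sum E) UNIV" by (simp add: R_def)
  then have Rsum: "(R has_sum E) UNIV"
    using has_sum_reindex_bij_betw[of dec UNIV UNIV R E] bij_dec by simp
  have EI: "E \<preceq>\<^sub>L mat 1"
  proof -
    have "mat 1 - E = diagm (\<lambda>i. if i = i0 then 0 else 1)"
      by (simp add: E_def diagm_def mat_def vec_eq_iff)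
    then show ?thesis unfolding loewner_le_def by (simp add: psd_diagm)
  qed
  have Rpsd: "0 \<preceq>\<^sub>L R s" for s
    unfolding loewner_le_def Rd by (simp add: psd_diagm wnn)
  have semi: "semi_povm R"
    unfolding semi_povm_def using Rsum EI Rpsd by (auto simp: Rd hermitian_diagm)
  have rK: "rf 1 (\<lambda>xs. K (xs!0))"
  proof -
    have "rf 1 (\<lambda>ys. LEAST k. (\<lambda>zs. if zs!1 \<le> \<sigma> (zs!0) then 0 else (1::nat)) (k # ys) = 0)"
    proof (rule rf_minimise)
      have "rf 2 (\<lambda>zs. if zs!1 \<le> \<sigma> (zs!0) then 0 else (1::nat))"
        by (intro rf_if_le rf_proj rf_const rf_app1[OF rs]) auto
      then show "rf (Suc 1) (\<lambda>zs. if zs!1 \<le> \<sigma> (zs!0) then 0 else (1::nat))" by (simp add: numeral_2_eq_2)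
    qed (rename_tac ys, rule_tac x="ys!0" in exI, simp add: seq_suble[OF sm])
    then show ?thesis by (rule rf_cong) (simp add: K_def)
  qed
  define A where "A y = (if \<sigma> (K y) = y then 1 else (0::nat))" for y
  define C where "C y = 2 ^ Suc (K y) - (1::nat)" for y
  have rA: "rf 2 (\<lambda>xs. A (xs!1))" unfolding A_def
    by (intro rf_if_eq rf_app1[OF rs] rf_app1[OF rK] rf_proj rf_const) auto
  have rC: "rf 2 (\<lambda>xs. C (xs!1))" unfolding C_def
    by (intro rf_sub rf_pow rf_Suc rf_app1[OF rK] rf_proj rf_const) auto
  define wq :: "nat \<Rightarrow> rat" where "wq y = (of_nat (A y) - of_nat 0) / of_nat (C y + 1)" for y
  have wq: "of_rat (wq y) = w y" for y
  proof -
    have "C y + 1 = 2 ^ Suc (K y)" unfolding C_def by (simp add: Suc_leI)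
    then show ?thesis unfolding wq_def w_def A_def
      by (simp add: of_rat_divide of_rat_power power_one_over del: power_Suc)
  qed
  have rwq: "rec_rat_fn (\<lambda>n y. wq y)"
    by (rule rec_rat_fnI[OF rA rf_const0 rC]) (simp add: wq_def)
  have tr: "total_rec_QC_mat' (\<lambda>n s. R s)"
    unfolding total_rec_QC_mat'_def
  proof (intro allI)
    fix i j :: 'n
    show "\<exists>re im. rec_rat_fn re \<and> rec_rat_fn im \<and>
       (\<forall>n s. R s $ i $ j = Complex (of_rat (re n (str_code s))) (of_rat (im n (str_code s))))"
    proof (cases "i = i0 \<and> j = i0")
      case True
      then show ?thesis
        by (intro exI[of _ "\<lambda>n y. wq y"] exI[of _ "\<lambda>_ _. 0"])
           (simp add: rwq rec_rat_fn_0 Rij wq complex_of_real_def)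
    next
      case False
      then show ?thesis
        by (intro exI[of _ "\<lambda>_ _. 0"] exI[of _ "\<lambda>_ _. 0"]) (auto simp: rec_rat_fn_0 Rij complex_eq_iff)
    qed
  qed
  have lc: "lower_computable_semi_povm R"
    unfolding lower_computable_semi_povm_def
  proof (intro conjI semi exI[of _ "\<lambda>n s. R s"] tr allI)
    fix n s
    show "her_Q (R s)" unfolding her_Q_def
      using wQ by (auto simp: hermitian_diagm Rd) (auto simp: diagm_def)
    show "R s \<preceq>\<^sub>L R s" by (simp add: loewner_le_def psd_def hermitian_def)
  qed simp
  obtain c :: real where c: "c > 0" "\<And>s. c *\<^sub>R R s \<preceq>\<^sub>L M s"
    using U lc unfolding universal_semi_povm_def by blast
  have bound: "c * (1/2)^Suc k \<le> 3 * (1/4)^k" for k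
  proof -
    have "Re ((c *\<^sub>R R (dec (\<sigma> k))) $ i0 $ i0) \<le> Re (M (dec (\<sigma> k)) $ i0 $ i0)"
      by (rule loewner_diag[OF c(2)])
    also have "\<dots> \<le> 3 * (1/4)^k" by (rule small)
    finally show ?thesis by (simp add: Rij w\<sigma>)
  qed
  obtain k where k: "(1/2::real)^k < c / 6"
    using real_arch_pow_inv[of "c/6" "1/2"] c(1) by auto
  have "c * (1/2)^Suc k \<le> 3 * ((1/2)^k * (1/2::real)^k)"
    using bound[of k] by (simp add: power_mult_distrib[symmetric])
  then have "c \<le> 6 * (1/2::real)^k" by (simp add: field_simps)
  with k show False by simp
qed



lemma rf_app2: "rf 2 (\<lambda>xs. F (xs!0) (xs!1)) \<Longrightarrow> rf n a \<Longrightarrow> rf n b \<Longrightarrow> rf n (\<lambda>xs. F (a xs) (b xs))"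
  using rf_comp2[of "\<lambda>xs. F (xs!0) (xs!1)" n a b] by simp

lemma rf_app3: "rf 3 (\<lambda>xs. F (xs!0) (xs!1) (xs!2)) \<Longrightarrow> rf n a \<Longrightarrow> rf n b \<Longrightarrow> rf n c \<Longrightarrow>
   rf n (\<lambda>xs. F (a xs) (b xs) (c xs))"
  using rf_comp3[of "\<lambda>xs. F (xs!0) (xs!1) (xs!2)" n a b c] by simp

lemma rf_tot2: "total_rec 2 a \<Longrightarrow> rf n u \<Longrightarrow> rf n v \<Longrightarrow> rf n (\<lambda>xs. a [u xs, v xs])"
  by (rule rf_comp2[OF rf_total])

definition iter :: "(nat \<Rightarrow> nat \<Rightarrow> nat) \<Rightarrow> nat \<Rightarrow> nat" where
  "iter H k = rec_nat (H 0 0) (\<lambda>k r. H (Suc k) r) k"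

lemma iter_0: "iter H 0 = H 0 0" by (simp add: iter_def)
lemma iter_Suc: "iter H (Suc k) = H (Suc k) (iter H k)" by (simp add: iter_def)

lemma rf_iter:
  assumes "rf 2 (\<lambda>xs. H (xs!0) (xs!1))"
  shows "rf 1 (\<lambda>xs. iter H (xs!0))"
proof -
  have "rf (Suc 0) (\<lambda>xs. rec_nat ((\<lambda>_. H 0 0) (tl xs)) (\<lambda>k r. (\<lambda>zs. H (Suc (zs!0)) (zs!1)) (k # r # tl xs)) (hd xs))"
  proof (rule rf_prim_rec)
    show "rf 0 (\<lambda>_. H 0 0)" by (rule rf_const)
    have "rf 2 (\<lambda>zs. H (Suc (zs!0)) (zs!1))"
      by (intro rf_app2[OF assms] rf_Suc rf_proj) auto
    then show "rf (Suc (Suc 0)) (\<lambda>zs. H (Suc (zs!0)) (zs!1))" by (simp add: numeral_2_eq_2)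
  qed
  then show ?thesis unfolding One_nat_def
    by (rule rf_cong) (case_tac xs, auto simp: iter_def)
qed

lemma iter_mono:
  assumes "\<And>k p. p < H k p"
  shows "strict_mono (iter H)"
  by (rule strict_monoI_Suc) (simp add: iter_Suc assms)

lemma rho_facts:
  fixes M :: "bool list \<Rightarrow> complex^'n^'n"
  assumes "\<And>s. 0 \<preceq>\<^sub>L M s" "(M has_sum S) UNIV"
  shows "\<And>y. 0 \<le> Re (M (dec y) $ i0 $ i0)"
    and "(\<lambda>y. Re (M (dec y) $ i0 $ i0)) sums Re (S $ i0 $ i0)"
proof -
  show "\<And>y. 0 \<le> Re (M (dec y) $ i0 $ i0)" by (rule diag_nonneg[OF assms(1)])
  have bl: "bounded_linear (\<lambda>A::complex^'n^'n. Re (A $ i0 $ i0))"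
    by (intro bounded_linear_compose[OF bounded_linear_Re] bounded_linear_compose[OF bounded_linear_vec_nth] bounded_linear_vec_nth)
  have "((\<lambda>s. Re (M s $ i0 $ i0)) has_sum Re (S $ i0 $ i0)) UNIV"
    using has_sum_bounded_linear[OF bl assms(2)] .
  then have "((\<lambda>y. Re (M (dec y) $ i0 $ i0)) has_sum Re (S $ i0 $ i0)) UNIV"
    using has_sum_reindex_bij_betw[of dec UNIV UNIV "\<lambda>s. Re (M s $ i0 $ i0)"] bij_dec by simp
  then show "(\<lambda>y. Re (M (dec y) $ i0 $ i0)) sums Re (S $ i0 $ i0)"
    by (rule has_sum_imp_sums)
qed



lemma of_rat_frac: "(of_rat ((of_nat x - of_nat y) / of_nat z) :: real) = (real x - real y) / real z"
  by (simp add: of_rat_divide of_rat_diff)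

lemma part1:
  fixes M :: "bool list \<Rightarrow> complex^'n^'n"
  assumes U: "universal_semi_povm M" and cm: "computable_mat_fn M"
  shows False
proof -
  define i0 :: 'n where "i0 = undefined"
  obtain G where G: "total_rec_QC_mat G" "\<And>s k. norm (M s - G s k) < (1/2)^k"
    using cm unfolding computable_mat_fn_def by blast
  obtain re im where re: "rec_rat_fn re"
    "\<And>s k. G s k $ i0 $ i0 = Complex (of_rat (re (str_code s) k)) (of_rat (im (str_code s) k))"
    using G(1) unfolding total_rec_QC_mat_def by blast
  obtain a b c where abc: "total_rec 2 a" "total_rec 2 b" "total_rec 2 c"
    "\<And>x y. re x y = (of_nat (a [x, y]) - of_nat (b [x, y])) / of_nat (c [x, y] + 1)"
    using re(1) unfolding rec_rat_fn_def by blast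
  have semi: "semi_povm M" using U unfolding universal_semi_povm_def lower_computable_semi_povm_def by blast
  then obtain S where S: "(M has_sum S) UNIV" "\<And>s. 0 \<preceq>\<^sub>L M s"
    unfolding semi_povm_def by blast
  define \<rho> where "\<rho> y = Re (M (dec y) $ i0 $ i0)" for y
  have "\<rho> sums Re (S $ i0 $ i0)" unfolding \<rho>_def by (rule rho_facts(2)[OF S(2) S(1)])
  then have \<rho>0: "\<rho> \<longlonglongrightarrow> 0" by (intro summable_LIMSEQ_zero sums_summable)
  define gg where "gg y k = (real (a [y, k]) - real (b [y, k])) / (real (c [y, k]) + 1)" for y k
  have close: "\<bar>\<rho> y - gg y k\<bar> < (1/2)^k" for y k
  proof -
    have "Re (G (dec y) k $ i0 $ i0) = gg y k"
      unfolding re(2) abc(4) by (simp add: of_rat_divide of_rat_diff of_rat_add gg_def add.commute)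
    then have "\<bar>\<rho> y - gg y k\<bar> = \<bar>Re ((M (dec y) - G (dec y) k) $ i0 $ i0)\<bar>"
      by (simp add: \<rho>_def)
    also have "\<dots> \<le> norm ((M (dec y) - G (dec y) k) $ i0 $ i0)" by (rule abs_Re_le_cmod)
    also have "\<dots> \<le> norm ((M (dec y) - G (dec y) k) $ i0)" by (rule Finite_Cartesian_Product.norm_nth_le)
    also have "\<dots> \<le> norm (M (dec y) - G (dec y) k)" by (rule Finite_Cartesian_Product.norm_nth_le)
    also have "\<dots> < (1/2)^k" by (rule G(2))
    finally show ?thesis .
  qed
  define T where "T k y \<longleftrightarrow> a [y, 2*k] * 4^k < 2 * (c [y, 2*k] + 1) + b [y, 2*k] * (4::nat)^k" for k y
  have Treal: "T k y \<longleftrightarrow> gg y (2*k) < 2 / 4^k" for k y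
  proof -
    define A where "A = real (a [y, 2*k])"
    define B where "B = real (b [y, 2*k])"
    define D where "D = real (c [y, 2*k]) + 1"
    define Q where "Q = (4::real)^k"
    have D: "D > 0" unfolding D_def by simp
    have Q: "Q > 0" unfolding Q_def by simp
    have "T k y \<longleftrightarrow> real (a [y, 2*k] * 4^k) < real (2 * (c [y, 2*k] + 1) + b [y, 2*k] * (4::nat)^k)"
      unfolding T_def by (simp only: of_nat_less_iff)
    also have "\<dots> \<longleftrightarrow> A * Q < 2 * D + B * Q"
      unfolding A_def B_def D_def Q_def by (simp add: algebra_simps)
    also have "\<dots> \<longleftrightarrow> (A - B) * Q < 2 * D" by (simp add: algebra_simps)
    also have "\<dots> \<longleftrightarrow> (A - B) < 2 * D / Q" using Q by (simp add: pos_less_divide_eq)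
    also have "\<dots> \<longleftrightarrow> (A - B) < 2 / Q * D" by simp
    also have "\<dots> \<longleftrightarrow> (A - B) / D < 2 / Q" using D by (simp add: pos_divide_less_eq)
    finally show ?thesis unfolding gg_def A_def B_def D_def Q_def .
  qed
  have q: "(1/2::real)^(2*k) = 1/4^k" for k
    by (simp add: power_mult power_one_over)
  have Tgood: "\<rho> y \<le> 3 * (1/4)^k" if "T k y" for k y
  proof -
    have "gg y (2*k) < 2 / 4^k" using that Treal by blast
    moreover have "\<rho> y < gg y (2*k) + 1/4^k" using close[of y "2*k"] q[of k] by linarith
    ultimately have "\<rho> y < 3 / 4^k" by simp
    then show ?thesis by (simp add: power_one_over)
  qed
  have Tex: "\<exists>y. p < y \<and> T k y" for k p
  proof -
    have "(0::real) < 1/4^k" by simp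
    then obtain B where B: "\<And>y. y \<ge> B \<Longrightarrow> \<bar>\<rho> y\<bar> < 1/4^k"
      using \<rho>0 unfolding LIMSEQ_def dist_real_def by fastforce
    define y where "y = B + p + 1"
    have "\<bar>\<rho> y\<bar> < 1/4^k" using B y_def by simp
    moreover have "gg y (2*k) < \<rho> y + 1/4^k" using close[of y "2*k"] q[of k] by linarith
    ultimately have "gg y (2*k) < 2/4^k" by simp
    then have "T k y" using Treal by blast
    then show ?thesis by (intro exI[of _ y]) (simp add: y_def)
  qed
  define H where "H k p = (LEAST y. (if p < y then (if T k y then 0 else 1) else (1::nat)) = 0)" for k p
  have H: "p < H k p \<and> T k (H k p)" for k p
  proof -
    have "\<exists>y. (if p < y then (if T k y then 0 else 1) else (1::nat)) = 0" using Tex[of p k] by auto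
    from LeastI_ex[OF this] show ?thesis unfolding H_def by (auto split: if_splits)
  qed
  have rH: "rf 2 (\<lambda>xs. H (xs!0) (xs!1))"
  proof -
    define g where "g zs = (if zs!2 < zs!0 then (if a [zs!0, 2*zs!1] * 4^(zs!1) < 2 * (c [zs!0, 2*zs!1] + 1) + b [zs!0, 2*zs!1] * 4^(zs!1) then 0 else 1) else (1::nat))" for zs
    have "rf 2 (\<lambda>ys. LEAST y. g (y # ys) = 0)"
    proof (rule rf_minimise)
      have "rf 3 g" unfolding g_def
        by (intro rf_if_less rf_tot2[OF abc(1)] rf_tot2[OF abc(2)] rf_tot2[OF abc(3)] rf_add rf_mult rf_pow rf_proj rf_const) auto
      then show "rf (Suc 2) g" by simp
    next
      fix ys :: "nat list" assume "length ys = 2"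
      then obtain k p where ys: "ys = [k, p]" by (metis len2)
      show "\<exists>y. g (y # ys) = 0" using Tex[of p k] unfolding ys g_def T_def by auto
    qed
    then show ?thesis
    proof (rule rf_cong)
      fix ys :: "nat list" assume "length ys = 2"
      then obtain k p where ys: "ys = [k, p]" by (metis len2)
      show "(LEAST y. g (y # ys) = 0) = H (ys!0) (ys!1)" unfolding ys H_def g_def T_def by simp
    qed
  qed
  define \<sigma> where "\<sigma> = iter H"
  have sm: "strict_mono \<sigma>" unfolding \<sigma>_def by (rule iter_mono) (use H in blast)
  have rs: "rf 1 (\<lambda>xs. \<sigma> (xs!0))" unfolding \<sigma>_def by (rule rf_iter[OF rH])
  have "T k (\<sigma> k)" for k by (cases k) (simp_all add: \<sigma>_def iter_0 iter_Suc H)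
  then have small: "Re (M (dec (\<sigma> k)) $ i0 $ i0) \<le> 3 * (1/4)^k" for k
    using Tgood unfolding \<rho>_def by blast
  show False by (rule key[OF U sm rs small])
qed



lemma div_bounds_real:
  fixes x d K :: nat assumes "d > 0"
  shows "real (x * 2^K div d) / 2^K \<le> real x / real d"
    and "real x / real d - 1 / 2^K < real (x * 2^K div d) / 2^K"
proof -
  define P where "P = x * 2^K div d"
  have le: "P * d \<le> x * 2^K" unfolding P_def by (rule div_times_less_eq_dividend)
  have lt: "x * 2^K < (P + 1) * d"
  proof -
    have "x * 2^K mod d < d" using assms by simp
    moreover have "x * 2^K = P * d + x * 2^K mod d" unfolding P_def by simp
    ultimately show ?thesis by (simp add: algebra_simps)
  qed
  have le': "real P * real d \<le> real x * 2^K" 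
  proof -
    have "real (P * d) \<le> real (x * 2^K)" using le by (simp only: of_nat_le_iff)
    then show ?thesis by simp
  qed
  have lt': "real x * 2^K < (real P + 1) * real d" 
  proof -
    have "real (x * 2^K) < real ((P + 1) * d)" using lt by (simp only: of_nat_less_iff)
    then show ?thesis by (simp add: algebra_simps)
  qed
  have d: "real d > 0" using assms by simp
  have q: "(2::real)^K > 0" by simp
  show "real P / 2^K \<le> real x / real d"
    using le' d q by (simp add: divide_simps mult.commute)
  show "real x / real d - 1 / 2^K < real P / 2^K"
  proof -
    have "real x < (real P + 1) * real d / 2^K" using lt' q by (simp add: pos_less_divide_eq)
    then have "real x / real d < (real P + 1) / 2^K" using d by (simp add: pos_divide_less_eq)
    then show ?thesis by (simp add: add_divide_distrib)
  qed
qed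

lemma part2:
  fixes M :: "bool list \<Rightarrow> complex^'n^'n"
  assumes U: "universal_semi_povm M" and pv: "povm M"
  shows False
proof -
  define i0 :: 'n where "i0 = undefined"
  obtain f where f: "total_rec_QC_mat' f" "\<And>s. (\<lambda>n. f n s) \<longlonglongrightarrow> M s" "\<And>n s. f n s \<preceq>\<^sub>L M s"
    using U unfolding universal_semi_povm_def lower_computable_semi_povm_def by blast
  obtain re im where re: "rec_rat_fn re"
    "\<And>n s. f n s $ i0 $ i0 = Complex (of_rat (re n (str_code s))) (of_rat (im n (str_code s)))"
    using f(1) unfolding total_rec_QC_mat'_def by blast
  obtain a b c where abc: "total_rec 2 a" "total_rec 2 b" "total_rec 2 c"
    "\<And>x y. re x y = (of_nat (a [x, y]) - of_nat (b [x, y])) / of_nat (c [x, y] + 1)"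
    using re(1) unfolding rec_rat_fn_def by blast
  have Ms: "(M has_sum mat 1) UNIV" "\<And>s. 0 \<preceq>\<^sub>L M s" using pv unfolding povm_def by auto
  define \<rho> where "\<rho> y = Re (M (dec y) $ i0 $ i0)" for y
  have \<rho>s: "\<rho> sums 1" using rho_facts(2)[OF Ms(2) Ms(1), of i0] unfolding \<rho>_def by (simp add: mat_def)
  have \<rho>0: "\<rho> y \<ge> 0" for y unfolding \<rho>_def by (rule rho_facts(1)[OF Ms(2) Ms(1)])
  define v where "v n y = Re (f n (dec y) $ i0 $ i0)" for n y
  have v_eq: "v n y = (real (a [n, y]) - real (b [n, y])) / (real (c [n, y]) + 1)" for n y
    unfolding v_def re(2) abc(4) by (simp add: of_rat_divide of_rat_diff of_rat_add add.commute)
  have v_le: "v n y \<le> \<rho> y" for n y unfolding v_def \<rho>_def by (rule loewner_diag[OF f(3)])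
  have bl: "bounded_linear (\<lambda>A::complex^'n^'n. Re (A $ i0 $ i0))"
    by (intro bounded_linear_compose[OF bounded_linear_Re] bounded_linear_compose[OF bounded_linear_vec_nth] bounded_linear_vec_nth)
  have v_conv: "(\<lambda>n. v n y) \<longlonglongrightarrow> \<rho> y" for y
    unfolding v_def \<rho>_def by (rule bounded_linear.tendsto[OF bl f(2)])
  define P where "P z y K = ((a [z, y] - b [z, y]) * 2^K) div Suc (c [z, y])" for z y K
  have P_le: "real (P z y K) / 2^K \<le> \<rho> y" for z y K
  proof -
    have "real (P z y K) / 2^K \<le> real (a [z, y] - b [z, y]) / real (Suc (c [z, y]))"
      unfolding P_def by (rule div_bounds_real(1)) simp
    also have "\<dots> \<le> \<rho> y"
    proof (cases "b [z, y] \<le> a [z, y]")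
      case True
      then show ?thesis using v_le[of z y] v_eq[of z y] by (simp add: of_nat_diff add.commute)
    next
      case False
      then show ?thesis using \<rho>0[of y] by simp
    qed
    finally show ?thesis .
  qed
  have P_ge: "max (v z y) 0 - 1 / 2^K < real (P z y K) / 2^K" for z y K
  proof -
    have m: "max (v z y) 0 \<le> real (a [z, y] - b [z, y]) / real (Suc (c [z, y]))"
    proof (cases "b [z, y] \<le> a [z, y]")
      case True
      then show ?thesis using v_eq[of z y] by (simp add: of_nat_diff add.commute)
    next
      case False
      then have "v z y \<le> 0" using v_eq[of z y] by (simp add: divide_nonpos_pos)
      then show ?thesis by simp
    qed
    have "real (a [z, y] - b [z, y]) / real (Suc (c [z, y])) - 1 / 2^K < real (P z y K) / 2^K"
      unfolding P_def by (rule div_bounds_real(2)) simp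
    with m show ?thesis by linarith
  qed
  define SP where "SP z K = (\<Sum>y<Suc z. P z y K)" for z K
  define KK where "KK z k = 2*k + z + 2" for z k :: nat
  define T2 where "T2 k z \<longleftrightarrow> 4^k * 2^(KK z k) < 4^k * SP z (KK z k) + (2::nat)^(KK z k)" for k z
  have T2real: "T2 k z \<longleftrightarrow> 1 - 1/4^k < real (SP z (KK z k)) / 2^(KK z k)" for k z
  proof -
    define S where "S = real (SP z (KK z k))"
    define Q where "Q = (4::real)^k"
    define W where "W = (2::real)^(KK z k)"
    have Q: "Q > 0" unfolding Q_def by simp
    have W: "W > 0" unfolding W_def by simp
    have "T2 k z \<longleftrightarrow> real (4^k * 2^(KK z k)) < real (4^k * SP z (KK z k) + (2::nat)^(KK z k))"
      unfolding T2_def by (simp only: of_nat_less_iff)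
    also have "\<dots> \<longleftrightarrow> Q * W < Q * S + W"
      unfolding S_def Q_def W_def by simp
    also have "\<dots> \<longleftrightarrow> 1 - 1/Q < S / W"
      using Q W by (simp add: field_simps)
    finally show ?thesis unfolding S_def Q_def W_def .
  qed
  have T2good: "\<rho> y < 1/4^k" if "T2 k z" "z < y" for k z y
  proof -
    define K where "K = KK z k"
    have "sum \<rho> (insert y {..<Suc z}) \<le> suminf \<rho>"
      by (rule sum_le_suminf) (use \<rho>s \<rho>0 in \<open>auto simp: sums_iff\<close>)
    then have "sum \<rho> {..<Suc z} + \<rho> y \<le> 1" using \<rho>s that(2) by (simp add: sums_iff)
    moreover have "real (SP z K) / 2^K \<le> sum \<rho> {..<Suc z}"
      unfolding SP_def of_nat_sum sum_divide_distrib by (intro sum_mono P_le)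
    moreover have "1 - 1/4^k < real (SP z K) / 2^K" using T2real that(1) unfolding K_def by blast
    ultimately show ?thesis by linarith
  qed
  have T2ex: "\<exists>z. T2 k z" for k
  proof -
    define \<epsilon> :: real where "\<epsilon> = 1/4^k"
    have \<epsilon>: "\<epsilon> > 0" unfolding \<epsilon>_def by simp
    have "(\<lambda>m. \<Sum>y<m. \<rho> y) \<longlonglongrightarrow> 1" using \<rho>s unfolding sums_def .
    then obtain m0 where m0: "\<bar>(\<Sum>y<m0. \<rho> y) - 1\<bar> < \<epsilon>/3"
      using \<epsilon> unfolding LIMSEQ_def dist_real_def by (metis order_refl zero_less_divide_iff zero_less_numeral)
    have "(\<lambda>n. \<Sum>y<m0. v n y) \<longlonglongrightarrow> (\<Sum>y<m0. \<rho> y)"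
      by (intro tendsto_sum v_conv)
    then obtain N where N: "\<And>n. n \<ge> N \<Longrightarrow> \<bar>(\<Sum>y<m0. v n y) - (\<Sum>y<m0. \<rho> y)\<bar> < \<epsilon>/3"
      using \<epsilon> unfolding LIMSEQ_def dist_real_def by (metis zero_less_divide_iff zero_less_numeral)
    define z where "z = max m0 N"
    define K where "K = KK z k"
    have n1: "\<bar>(\<Sum>y<m0. v z y) - (\<Sum>y<m0. \<rho> y)\<bar> < \<epsilon>/3" using N[of z] unfolding z_def by simp
    have "(\<Sum>y<m0. v z y) > 1 - 2*\<epsilon>/3" using n1 m0 unfolding abs_less_iff by linarith
    have "(\<Sum>y<m0. v z y) \<le> (\<Sum>y<m0. max (v z y) 0)" by (intro sum_mono) simp
    also have "\<dots> \<le> (\<Sum>y<Suc z. max (v z y) 0)"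
      by (rule sum_mono2) (auto simp: z_def)
    finally have s1: "(\<Sum>y<m0. v z y) \<le> (\<Sum>y<Suc z. max (v z y) 0)" .
    have "(\<Sum>y<Suc z. max (v z y) 0 - 1/2^K) \<le> (\<Sum>y<Suc z. real (P z y K) / 2^K)"
      by (intro sum_mono less_imp_le P_ge)
    then have s2: "(\<Sum>y<Suc z. max (v z y) 0) - real (Suc z) / 2^K \<le> real (SP z K) / 2^K"
      unfolding SP_def of_nat_sum sum_divide_distrib sum_subtractf by simp
    have "real (Suc z) \<le> 2^z"
    proof -
      have "Suc z \<le> 2^z" by (rule Suc_leI) (rule less_exp)
      then show ?thesis by (metis of_nat_le_iff of_nat_numeral of_nat_power)
    qed
    then have "real (Suc z) / 2^K \<le> 2^z / 2^K" by (simp add: divide_right_mono)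
    also have "2^z / 2^K = (\<epsilon> / 4 :: real)"
    proof -
      have "(2::real)^K = 4^k * 2^z * 4"
        unfolding K_def KK_def by (simp add: power_add power_mult)
      then show ?thesis unfolding \<epsilon>_def by simp
    qed
    finally have s3: "real (Suc z) / 2^K \<le> \<epsilon> / 4" .
    have "1 - \<epsilon> < real (SP z K) / 2^K"
      using s1 s2 s3 \<open>(\<Sum>y<m0. v z y) > 1 - 2*\<epsilon>/3\<close> \<epsilon> by linarith
    then have "T2 k z" using T2real unfolding K_def \<epsilon>_def by blast
    then show ?thesis by blast
  qed
  define Z where "Z k = (LEAST z. T2 k z)" for k
  have TZ: "T2 k (Z k)" for k unfolding Z_def by (rule LeastI_ex[OF T2ex])
  define H where "H k p = Suc (max p (Z k))" for k p
  define \<sigma> where "\<sigma> = iter H"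
  have sm: "strict_mono \<sigma>" unfolding \<sigma>_def by (rule iter_mono) (simp add: H_def)
  have Z\<sigma>: "Z k < \<sigma> k" for k by (cases k) (simp_all add: \<sigma>_def iter_0 iter_Suc H_def)
  have small: "Re (M (dec (\<sigma> k)) $ i0 $ i0) \<le> 3 * (1/4)^k" for k
  proof -
    have "\<rho> (\<sigma> k) < 1/4^k" by (rule T2good[OF TZ Z\<sigma>])
    moreover have "1/4^k \<le> 3/(4::real)^k" by (simp add: divide_right_mono)
    ultimately show ?thesis unfolding \<rho>_def power_one_over by linarith
  qed
  define sumP where "sumP m z K = rec_nat 0 (\<lambda>y r. r + P z y K) m" for m z K
  have sumP: "sumP m z K = (\<Sum>y<m. P z y K)" for m z K
    by (induction m) (simp_all add: sumP_def)
  have rP: "rf 4 (\<lambda>zs. zs!1 + P (zs!2) (zs!0) (zs!3))"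
    unfolding P_def
    by (intro rf_add rf_div rf_mult rf_sub rf_pow rf_tot2[OF abc(1)] rf_tot2[OF abc(2)] rf_tot2[OF abc(3)] rf_proj rf_const) auto
  have rS: "rf 3 (\<lambda>xs. sumP (xs!0) (xs!1) (xs!2))"
  proof -
    have "rf (Suc 2) (\<lambda>xs. rec_nat ((\<lambda>_. 0) (tl xs)) (\<lambda>k r. (\<lambda>zs. zs!1 + P (zs!2) (zs!0) (zs!3)) (k # r # tl xs)) (hd xs))"
      by (rule rf_prim_rec) (use rP rf_const0 in \<open>simp_all add: numeral_eq_Suc\<close>)
    then have "rf (Suc 2) (\<lambda>xs. sumP (xs!0) (xs!1) (xs!2))"
    proof (rule rf_cong)
      fix xs :: "nat list" assume "length xs = Suc 2"
      then obtain m z K where xs: "xs = [m, z, K]" by (metis len3 numeral_3_eq_3 numeral_2_eq_2 Suc_1)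
      show "rec_nat ((\<lambda>_. 0) (tl xs)) (\<lambda>k r. (\<lambda>zs. zs!1 + P (zs!2) (zs!0) (zs!3)) (k # r # tl xs)) (hd xs)
          = sumP (xs!0) (xs!1) (xs!2)" unfolding xs sumP_def by simp
    qed
    then show ?thesis by simp
  qed
  have rZ: "rf 1 (\<lambda>xs. Z (xs!0))"
  proof -
    define g where "g zs = (if 4^(zs!1) * 2^(2*zs!1 + zs!0 + 2) < 4^(zs!1) * sumP (Suc (zs!0)) (zs!0) (2*zs!1 + zs!0 + 2) + 2^(2*zs!1 + zs!0 + 2) then 0 else (1::nat))" for zs
    have "rf 1 (\<lambda>ys. LEAST y. g (y # ys) = 0)"
    proof (rule rf_minimise)
      have "rf 2 g" unfolding g_def
        by (intro rf_if_less rf_app3[OF rS] rf_add rf_mult rf_pow rf_Suc rf_proj rf_const) auto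
      then show "rf (Suc 1) g" by (simp add: numeral_2_eq_2)
    next
      fix ys :: "nat list" assume "length ys = 1"
      then obtain k where ys: "ys = [k]" by (metis len1)
      show "\<exists>y. g (y # ys) = 0" using T2ex[of k] unfolding ys g_def T2_def SP_def KK_def sumP by auto
    qed
    then show ?thesis
    proof (rule rf_cong)
      fix ys :: "nat list" assume "length ys = 1"
      then obtain k where ys: "ys = [k]" by (metis len1)
      show "(LEAST y. g (y # ys) = 0) = Z (ys!0)"
        unfolding ys Z_def g_def T2_def SP_def KK_def sumP by simp
    qed
  qed
  have rH: "rf 2 (\<lambda>xs. H (xs!0) (xs!1))" unfolding H_def
    by (intro rf_Suc rf_max rf_proj rf_app1[OF rZ]) auto
  have rs: "rf 1 (\<lambda>xs. \<sigma> (xs!0))" unfolding \<sigma>_def by (rule rf_iter[OF rH])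
  show False by (rule key[OF U sm rs small])
qed

theorem mainTheorem12:
  fixes M :: "bool list \<Rightarrow> complex^'n^'n"
  assumes "universal_semi_povm M"
  shows "\<not> computable_mat_fn M \<and> \<not> povm M"
  using part1[OF assms] part2[OF assms] by blast


end
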